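(* Let $(P,\leqslant)$ be a conditionally-complete interpolating poset and let $P^* := \{x \in P : \exists\, y \in P,\ y \ll x\}$ with the induced order. Then $P^*$ is a conditionally-complete interpolating subposet of $P$.
   Context: A poset is conditionally-complete if every nonempty subset bounded above has a supremum. A nonempty subset $D$ is directed if any two elements of $D$ have an upper bound in $D$. For a poset $R$ and $x,y \in R$, $x \ll_R y$ means: for every directed subset $D$ of $R$ bounded above in $R$ with supremum $d_0$ in $R$, $y \leqslant d_0$ implies $x \leqslant d$ for some $d \in D$; write $\ll$ for $\ll_P$. A poset $R$ is interpolating if whenever $x \ll_R y$ there is $z \in R$ with $x \ll_R z \ll_R y$. A subset $Q \subseteq P$ with the induced order is a subposet of $P$ if for all $x,y \in Q$: $x \ll_Q y \iff x \ll y$. *)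

theory Defs
  imports Main
begin

text \<open>A poset is modelled as a carrier set R in a type with a partial order,
  carrying the induced order.  All notions are relative to the carrier.\<close>

definition upper_bound_in :: "'a::order set \<Rightarrow> 'a set \<Rightarrow> 'a \<Rightarrow> bool" where
  "upper_bound_in R S u \<longleftrightarrow> u \<in> R \<and> (\<forall>s\<in>S. s \<le> u)"

definition bounded_above_in :: "'a::order set \<Rightarrow> 'a set \<Rightarrow> bool" where
  "bounded_above_in R S \<longleftrightarrow> (\<exists>u. upper_bound_in R S u)"

definition is_sup_in :: "'a::order set \<Rightarrow> 'a set \<Rightarrow> 'a \<Rightarrow> bool" where
  "is_sup_in R S d \<longleftrightarrow> upper_bound_in R S d \<and> (\<forall>u. upper_bound_in R S u \<longrightarrow> d \<le> u)"

definition cond_complete :: "'a::order set \<Rightarrow> bool" where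
  "cond_complete R \<longleftrightarrow>
     (\<forall>S. S \<subseteq> R \<and> S \<noteq> {} \<and> bounded_above_in R S \<longrightarrow> (\<exists>d. is_sup_in R S d))"

definition directed_in :: "'a::order set \<Rightarrow> 'a set \<Rightarrow> bool" where
  "directed_in R D \<longleftrightarrow> D \<noteq> {} \<and> D \<subseteq> R \<and> (\<forall>x\<in>D. \<forall>y\<in>D. \<exists>z\<in>D. x \<le> z \<and> y \<le> z)"

definition way_below_in :: "'a::order set \<Rightarrow> 'a \<Rightarrow> 'a \<Rightarrow> bool" where
  "way_below_in R x y \<longleftrightarrow>
     (\<forall>D d0. directed_in R D \<and> bounded_above_in R D \<and> is_sup_in R D d0 \<and> y \<le> d0
        \<longrightarrow> (\<exists>d\<in>D. x \<le> d))"

definition interpolating :: "'a::order set \<Rightarrow> bool" where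
  "interpolating R \<longleftrightarrow>
     (\<forall>x\<in>R. \<forall>y\<in>R. way_below_in R x y \<longrightarrow> (\<exists>z\<in>R. way_below_in R x z \<and> way_below_in R z y))"

definition subposet :: "'a::order set \<Rightarrow> 'a set \<Rightarrow> bool" where
  "subposet Q P \<longleftrightarrow> Q \<subseteq> P \<and> (\<forall>x\<in>Q. \<forall>y\<in>Q. way_below_in Q x y \<longleftrightarrow> way_below_in P x y)"

definition star_part :: "'a::order set \<Rightarrow> 'a set" where
  "star_part P = {x \<in> P. \<exists>y\<in>P. way_below_in P y x}"

end

theory Submission
  imports Defs
begin

lemma wb_le: "way_below_in P x y \<Longrightarrow> y \<in> P \<Longrightarrow> x \<le> y"
  unfolding way_below_in_def
  apply (drule spec[of _ "{y}"], drule spec[of _ y])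
  by (auto simp: directed_in_def bounded_above_in_def upper_bound_in_def is_sup_in_def)

lemma wb_mono: "way_below_in P x y \<Longrightarrow> y \<le> y' \<Longrightarrow> way_below_in P x y'"
  unfolding way_below_in_def by (meson order_trans)

lemma star_sub: "star_part P \<subseteq> P"
  by (auto simp: star_part_def)

lemma star_up: "x \<in> star_part P \<Longrightarrow> x \<le> x' \<Longrightarrow> x' \<in> P \<Longrightarrow> x' \<in> star_part P"
  unfolding star_part_def using wb_mono by blast

lemma sup_P:
  assumes cc: "cond_complete P" and D: "D \<subseteq> star_part P" "D \<noteq> {}"
    and b: "bounded_above_in (star_part P) D"
  obtains d where "is_sup_in P D d" "d \<in> star_part P" "is_sup_in (star_part P) D d"
proof -
  have "bounded_above_in P D" using b star_sub
    by (auto simp: bounded_above_in_def upper_bound_in_def)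
  moreover have "D \<subseteq> P" using D star_sub by blast
  ultimately obtain d where d: "is_sup_in P D d" using cc D unfolding cond_complete_def by blast
  from D obtain s where s: "s \<in> D" by blast
  have dP: "d \<in> P" "s \<le> d" using d s by (auto simp: is_sup_in_def upper_bound_in_def)
  have ds: "d \<in> star_part P" using star_up[of s P d] s D dP by blast
  have "is_sup_in (star_part P) D d" using d ds star_sub
    by (auto simp: is_sup_in_def upper_bound_in_def)
  then show ?thesis using that d ds by blast
qed

lemma sup_unique: "is_sup_in R D a \<Longrightarrow> is_sup_in R D b \<Longrightarrow> a = b"
  unfolding is_sup_in_def by (meson order_antisym)

lemma cc_star: assumes "cond_complete P" shows "cond_complete (star_part P)"
  unfolding cond_complete_def
proof (intro allI impI)
  fix S assume "S \<subseteq> star_part P \<and> S \<noteq> {} \<and> bounded_above_in (star_part P) S"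
  then show "\<exists>d. is_sup_in (star_part P) S d" using sup_P[OF assms] by metis
qed

lemma sub1:
  assumes cc: "cond_complete P" and w: "way_below_in P x y"
  shows "way_below_in (star_part P) x y"
  unfolding way_below_in_def
proof (intro allI impI)
  fix D d0 assume h: "directed_in (star_part P) D \<and> bounded_above_in (star_part P) D
     \<and> is_sup_in (star_part P) D d0 \<and> y \<le> d0"
  then have D: "D \<subseteq> star_part P" "D \<noteq> {}" by (auto simp: directed_in_def)
  obtain d where d: "is_sup_in P D d" "is_sup_in (star_part P) D d"
    using sup_P[OF cc D] h by metis
  have "d0 = d" using sup_unique d h by metis
  moreover have "directed_in P D" using h star_sub by (auto simp: directed_in_def)
  moreover have "bounded_above_in P D" using d by (auto simp: is_sup_in_def bounded_above_in_def)
  ultimately show "\<exists>d\<in>D. x \<le> d" using w h d unfolding way_below_in_def by blast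
qed

lemma sub2:
  assumes ip: "interpolating P" and yS: "y \<in> star_part P" and xP: "x \<in> P"
    and w: "way_below_in (star_part P) x y"
  shows "way_below_in P x y"
  unfolding way_below_in_def
proof (intro allI impI)
  fix D d0 assume h: "directed_in P D \<and> bounded_above_in P D \<and> is_sup_in P D d0 \<and> y \<le> d0"
  from yS obtain v where v: "v \<in> P" "way_below_in P v y" "y \<in> P" unfolding star_part_def by blast
  then obtain z where z: "z \<in> P" "way_below_in P v z" "way_below_in P z y"
    using ip unfolding interpolating_def by blast
  have "\<exists>d\<in>D. z \<le> d" using z(3) h unfolding way_below_in_def by metis
  then obtain d1 where d1: "d1 \<in> D" "z \<le> d1" by blast
  have DP: "D \<subseteq> P" using h by (auto simp: directed_in_def)
  have "way_below_in P v d1" using wb_mono[OF z(2) d1(2)] .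
  then have d1S: "d1 \<in> star_part P" using d1 DP v unfolding star_part_def by blast
  define D' where "D' = {d \<in> D. d1 \<le> d}"
  have d0P: "d0 \<in> P" "\<forall>a\<in>D. a \<le> d0" using h by (auto simp: is_sup_in_def upper_bound_in_def)
  have D'S: "D' \<subseteq> star_part P" using star_up[OF d1S] DP unfolding D'_def by blast
  have d0S: "d0 \<in> star_part P" using star_up[OF d1S] d0P d1 by blast
  have dir: "directed_in (star_part P) D'"
    unfolding directed_in_def
  proof (intro conjI ballI)
    show "D' \<noteq> {}" using d1 unfolding D'_def by blast
    show "D' \<subseteq> star_part P" by (fact D'S)
    fix a b assume ab: "a \<in> D'" "b \<in> D'"
    then have "a \<in> D" "b \<in> D" "d1 \<le> a" unfolding D'_def by auto
    then have "\<exists>c\<in>D. a \<le> c \<and> b \<le> c" using h unfolding directed_in_def by blast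
    then obtain c where c: "c \<in> D" "a \<le> c" "b \<le> c" by blast
    then have "d1 \<le> c" using \<open>d1 \<le> a\<close> by (rule_tac order_trans) auto
    then show "\<exists>c\<in>D'. a \<le> c \<and> b \<le> c" unfolding D'_def using c by blast
  qed
  have bd: "bounded_above_in (star_part P) D'"
    using d0S d0P unfolding bounded_above_in_def upper_bound_in_def D'_def by blast
  have sup: "is_sup_in (star_part P) D' d0"
    unfolding is_sup_in_def
  proof (intro conjI allI impI)
    show "upper_bound_in (star_part P) D' d0"
      using d0S d0P unfolding upper_bound_in_def D'_def by blast
    fix u assume u: "upper_bound_in (star_part P) D' u"
    have "upper_bound_in P D u"
      unfolding upper_bound_in_def
    proof (intro conjI ballI)
      show "u \<in> P" using u star_sub unfolding upper_bound_in_def by blast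
      fix a assume "a \<in> D"
      then obtain c where "c \<in> D" "a \<le> c" "d1 \<le> c" using h d1 unfolding directed_in_def by blast
      then have "c \<in> D'" unfolding D'_def by blast
      then show "a \<le> u" using u \<open>a \<le> c\<close> unfolding upper_bound_in_def by (meson order_trans)
    qed
    then show "d0 \<le> u" using h unfolding is_sup_in_def by blast
  qed
  have "\<exists>d\<in>D'. x \<le> d" using w dir bd sup h unfolding way_below_in_def by metis
  then obtain d where "d \<in> D'" "x \<le> d" by blast
  then show "\<exists>d\<in>D. x \<le> d" unfolding D'_def by blast
qed

theorem corollary2p5:
  fixes P :: "'a::order set"
  assumes "cond_complete P" and "interpolating P"
  shows "cond_complete (star_part P) \<and> interpolating (star_part P) \<and> subposet (star_part P) P"
proof -
  have sp: "subposet (star_part P) P"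
    unfolding subposet_def using star_sub sub1[OF assms(1)] sub2[OF assms(2)] star_sub
    by blast
  have "interpolating (star_part P)"
    unfolding interpolating_def
  proof (intro ballI impI)
    fix x y assume xy: "x \<in> star_part P" "y \<in> star_part P" "way_below_in (star_part P) x y"
    then have w: "way_below_in P x y" using sp unfolding subposet_def by blast
    have "x \<in> P" "y \<in> P" using xy star_sub by auto
    then obtain z where z: "z \<in> P" "way_below_in P x z" "way_below_in P z y"
      using assms(2) w unfolding interpolating_def by blast
    have zS: "z \<in> star_part P" using z \<open>x \<in> P\<close> unfolding star_part_def by blast
    show "\<exists>z\<in>star_part P. way_below_in (star_part P) x z \<and> way_below_in (star_part P) z y"
      using zS z xy sp unfolding subposet_def by blast
  qed
  then show ?thesis using cc_star[OF assms(1)] sp by blast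
qed

end
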